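(* Let $m\ge 1$, let $\lambda_2\ge 0$, and let $f_1\ge f_2\ge\cdots\ge f_m$ be real numbers. Then there exist real numbers $\tau_{ij}\in[-\lambda_2,\lambda_2]$ for $i\ne j\in\{1,\dots,m\}$, satisfying $\tau_{ij}=-\tau_{ji}$ for all $i\neq j$, such that $$f_i+\sum_{j\in\{1,\dots,m\}\setminus\{i\}}\tau_{ij}=0,\qquad i=1,\dots,m,$$ if and only if $$\sum_{j=1}^{k}f_j\le\lambda_2 k(m-k)\quad\text{for }k=1,\dots,m-1,$$ and $\sum_{j=1}^{m}f_j=0$. *)

theory Defs
  imports Main "HOL.Real"
begin

end

theory Submission
  imports Defs Complex_Main
begin


lemma split_sum: "k \<le> b \<Longrightarrow> (\<Sum>i=1..b. g i) = (\<Sum>i=1..k. g i) + (\<Sum>i=Suc k..b. (g i::real))"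
proof (induction b)
  case 0 then show ?case by simp
next
  case (Suc b)
  show ?case
  proof (cases "k = Suc b")
    case True then show ?thesis by simp
  next
    case False then have "k \<le> b" using Suc by simp
    then show ?thesis using Suc by (simp add: sum.cl_ivl_Suc)
  qed
qed

lemma antisym_zero:
  assumes "finite A" "\<forall>i\<in>A. \<forall>j\<in>A. i \<noteq> j \<longrightarrow> \<tau> i j = - \<tau> j i"
  shows "(\<Sum>i\<in>A. \<Sum>j\<in>A - {i}. (\<tau> i j :: real)) = 0"
proof -
  have e: "A - {i} = {j. j \<in> A \<and> i \<noteq> j}" for i by auto
  have "(\<Sum>i\<in>A. \<Sum>j\<in>A - {i}. \<tau> i j) = (\<Sum>i\<in>A. \<Sum>j\<in>{j. j \<in> A \<and> i \<noteq> j}. \<tau> i j)"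
    by (simp add: e)
  also have "\<dots> = (\<Sum>j\<in>A. \<Sum>i\<in>{i. i \<in> A \<and> i \<noteq> j}. \<tau> i j)"
    by (rule sum.swap_restrict) (use assms in auto)
  also have "\<dots> = (\<Sum>j\<in>A. \<Sum>i\<in>{i. i \<in> A \<and> i \<noteq> j}. - \<tau> j i)"
    using assms(2) by (intro sum.cong refl) auto
  also have "\<dots> = - (\<Sum>j\<in>A. \<Sum>i\<in>A - {j}. \<tau> j i)"
    by (simp add: sum_negf e[symmetric] eq_commute)
  finally show ?thesis by simp
qed



lemma nec:
  fixes l :: real
  assumes ab: "\<forall>i\<in>{1..m}. \<forall>j\<in>{1..m}. i \<noteq> j \<longrightarrow> \<bar>\<tau> i j\<bar> \<le> l \<and> \<tau> i j = - \<tau> j i"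
    and row: "\<forall>i\<in>{1..m}. f i + (\<Sum>j\<in>{1..m} - {i}. \<tau> i j) = 0"
    and k: "k \<le> m"
  shows "(\<Sum>j=1..k. f j) \<le> l * real k * (real m - real k)"
    "(\<Sum>j=1..m. f j) = 0"
proof -
  have fi: "f i = - (\<Sum>j\<in>{1..m} - {i}. \<tau> i j)" if "i \<in> {1..m}" for i
    using row that by (simp add: eq_neg_iff_add_eq_0)
  have sp: "(\<Sum>j\<in>{1..m} - {i}. \<tau> i j) = (\<Sum>j\<in>{1..k} - {i}. \<tau> i j) + (\<Sum>j\<in>{Suc k..m}. \<tau> i j)"
    if "i \<in> {1..k}" for i
  proof -
    have "{1..m} - {i} = ({1..k} - {i}) \<union> {Suc k..m}" using that k by auto
    moreover have "({1..k} - {i}) \<inter> {Suc k..m} = {}" by auto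
    ultimately show ?thesis by (simp only: sum.union_disjoint[OF finite_Diff[OF finite_atLeastAtMost] finite_atLeastAtMost])
  qed
  have ab': "\<tau> i j = - \<tau> j i" "\<bar>\<tau> i j\<bar> \<le> l" if "i\<in>{1..m}" "j\<in>{1..m}" "i\<noteq>j" for i j
    using ab that by blast+
  have z: "(\<Sum>i\<in>{1..k}. \<Sum>j\<in>{1..k} - {i}. \<tau> i j) = 0"
  proof (rule antisym_zero)
    show "\<forall>i\<in>{1..k}. \<forall>j\<in>{1..k}. i \<noteq> j \<longrightarrow> \<tau> i j = - \<tau> j i"
      using k by (intro ballI impI ab'(1)) auto
  qed simp
  have "(\<Sum>j=1..k. f j) = (\<Sum>i=1..k. - ((\<Sum>j\<in>{1..k} - {i}. \<tau> i j) + (\<Sum>j\<in>{Suc k..m}. \<tau> i j)))"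
    using fi sp k by (intro sum.cong) auto
  also have "\<dots> = - (\<Sum>i=1..k. \<Sum>j\<in>{Suc k..m}. \<tau> i j)"
    using z by (simp add: sum_negf sum.distrib sum_subtractf)
  also have "\<dots> = (\<Sum>i=1..k. \<Sum>j\<in>{Suc k..m}. - \<tau> i j)"
    by (simp add: sum_negf)
  also have "\<dots> \<le> (\<Sum>i=1..k. \<Sum>j\<in>{Suc k..m}. l)"
    proof (intro sum_mono)
    fix i j assume "i \<in> {1..k}" "j \<in> {Suc k..m}"
    then show "- \<tau> i j \<le> l" using ab'(2)[of i j] k by simp
  qed
  also have "\<dots> = l * real k * (real m - real k)"
    using k by (simp add: of_nat_diff)
  finally show "(\<Sum>j=1..k. f j) \<le> l * real k * (real m - real k)" .
  have z2: "(\<Sum>i\<in>{1..m}. \<Sum>j\<in>{1..m} - {i}. \<tau> i j) = 0"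
    by (rule antisym_zero) (auto intro: ab'(1))
  have "(\<Sum>j=1..m. f j) = (\<Sum>i=1..m. - (\<Sum>j\<in>{1..m} - {i}. \<tau> i j))"
    using fi by (intro sum.cong) auto
  then show "(\<Sum>j=1..m. f j) = 0" using z2 by (simp add: sum_negf)
qed



lemma clamp_mono:
  fixes l t x y :: real
  assumes "x \<le> y" "l \<ge> 0"
  shows "x - min l (max 0 (x - t)) \<le> y - min l (max 0 (y - t))"
  using assms by (simp add: min_def max_def)

lemma chord:
  fixes l X Ga Gb t :: real and a k b m :: nat
  assumes "a < k" "k < b" "l \<ge> 0"
    and "X = Ga + (real k - real a) * t" "Gb = X + (real b - real k) * t"
    and "Ga \<le> l * real a * (real m - real a)" "Gb \<le> l * real b * (real m - real b)"
  shows "X \<le> l * real k * (real m - real k)"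
proof -
  have ab: "real a < real k" "real k < real b" using assms(1,2) by simp_all
  have e: "(real b - real a) * X = (real b - real k) * Ga + (real k - real a) * Gb"
    by (simp only: assms(5), simp add: assms(4) algebra_simps)
  have "(real b - real k) * Ga \<le> (real b - real k) * (l * real a * (real m - real a))"
    using ab assms(6) by (intro mult_left_mono) auto
  moreover have "(real k - real a) * Gb \<le> (real k - real a) * (l * real b * (real m - real b))"
    using ab assms(7) by (intro mult_left_mono) auto
  moreover have "(real b - real k) * (l * real a * (real m - real a)) + (real k - real a) * (l * real b * (real m - real b))
     = (real b - real a) * (l * real k * (real m - real k)) - l * (real b - real a) * (real k - real a) * (real b - real k)"
    by (simp add: algebra_simps)
  moreover have "0 \<le> l * (real b - real a) * (real k - real a) * (real b - real k)"
    using ab assms(3) by simp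
  ultimately have "(real b - real a) * X \<le> (real b - real a) * (l * real k * (real m - real k))"
    using e by linarith
  then show ?thesis using ab by simp
qed

lemma suff:
  fixes l :: real and f :: "nat \<Rightarrow> real"
  assumes "1 \<le> m" "l \<ge> 0"
   and "\<forall>i j. 1 \<le> i \<longrightarrow> i \<le> j \<longrightarrow> j \<le> m \<longrightarrow> f j \<le> f i"
   and "\<forall>k\<in>{1..m-1}. (\<Sum>j=1..k. f j) \<le> l * real k * (real m - real k)"
   and "(\<Sum>j=1..m. f j) = 0"
  shows "\<exists>\<tau> :: nat \<Rightarrow> nat \<Rightarrow> real.
            (\<forall>i\<in>{1..m}. \<forall>j\<in>{1..m}. i \<noteq> j \<longrightarrow> \<bar>\<tau> i j\<bar> \<le> l \<and> \<tau> i j = - \<tau> j i)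
          \<and> (\<forall>i\<in>{1..m}. f i + (\<Sum>j\<in>{1..m} - {i}. \<tau> i j) = 0)"
  using assms(1,3,4,5)
proof (induction m arbitrary: f rule: nat_induct_at_least)
  case base
  then have "f 1 = 0" by simp
  then show ?case by (intro exI[of _ "\<lambda>i j. 0"]) simp
next
  case (Suc m)
  have l0: "l \<ge> 0" using assms(2) .
  have mono: "f j \<le> f i" if "1 \<le> i" "i \<le> j" "j \<le> Suc m" for i j
    using Suc.prems(1) that by blast
  have Fb: "(\<Sum>j=1..k. f j) \<le> l * real k * (real (Suc m) - real k)" if "1 \<le> k" "k \<le> m" for k
    using Suc.prems(2) that by auto
  have Ftot: "(\<Sum>j=1..Suc m. f j) = 0" using Suc.prems(3) .
  have Fm: "(\<Sum>j=1..m. f j) = - f (Suc m)" using Ftot by (simp add: sum.cl_ivl_Suc)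
  have fn_le: "f (Suc m) \<le> 0"
  proof -
    have "(\<Sum>j=1..Suc m. f (Suc m)) \<le> (\<Sum>j=1..Suc m. f j)"
      by (intro sum_mono) (use mono in auto)
    then have "real (Suc m) * f (Suc m) \<le> 0" using Ftot by simp
    then show ?thesis by (simp add: mult_le_0_iff)
  qed
  have fn_ge: "- f (Suc m) \<le> l * real m" using Fb[of m] Suc.hyps Fm by simp
  define s where "s \<theta> = (\<Sum>i=1..m. min l (max 0 (f i - \<theta>)))" for \<theta>
  have "\<exists>\<theta>. f (Suc m) - l \<le> \<theta> \<and> \<theta> \<le> f 1 \<and> s \<theta> = - f (Suc m)"
  proof (rule IVT2)
    have "s (f 1) = 0" unfolding s_def
      by (intro sum.neutral ballI) (use mono[of 1] l0 in auto)
    then show "s (f 1) \<le> - f (Suc m)" using fn_le by simp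
    have "s (f (Suc m) - l) = (\<Sum>i=1..m. l)" unfolding s_def
    proof (intro sum.cong refl)
      fix i assume "i \<in> {1..m}"
      then have "f (Suc m) \<le> f i" using mono[of i "Suc m"] by auto
      then show "min l (max 0 (f i - (f (Suc m) - l))) = l" using l0 by auto
    qed
    then show "- f (Suc m) \<le> s (f (Suc m) - l)" using fn_ge by (simp add: mult.commute)
    show "f (Suc m) - l \<le> f 1" using mono[of 1 "Suc m"] l0 by simp
    show "\<forall>x. f (Suc m) - l \<le> x \<and> x \<le> f 1 \<longrightarrow> isCont s x"
      unfolding s_def by (intro allI impI continuous_intros)
  qed
  then obtain \<theta> where h\<theta>: "s \<theta> = - f (Suc m)" by blast
  define c where "c i = min l (max 0 (f i - \<theta>))" for i
  define g where "g i = f i - c i" for i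
  have csum: "(\<Sum>i=1..m. c i) = - f (Suc m)" using h\<theta> unfolding s_def c_def .
  have c_bnd: "0 \<le> c i" "c i \<le> l" for i unfolding c_def using l0 by auto
  have gsum: "(\<Sum>i=1..m. g i) = 0" unfolding g_def using Fm csum by (simp add: sum_subtractf)
  have gmono: "\<forall>i j. 1 \<le> i \<longrightarrow> i \<le> j \<longrightarrow> j \<le> m \<longrightarrow> g j \<le> g i"
    unfolding g_def c_def by (intro allI impI clamp_mono[OF mono l0]) auto
  have G_eq: "(\<Sum>i=1..k. g i) = (\<Sum>i=1..k. f i) - (\<Sum>i=1..k. c i)" for k
    unfolding g_def by (simp add: sum_subtractf)
  have alg: "l * real k * (real (Suc m) - real k) - real k * l = l * real k * (real m - real k)" for k
    by (simp add: algebra_simps)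
  have FA: "(\<Sum>i=1..k. g i) \<le> l * real k * (real m - real k)" if "1 \<le> k" "k \<le> m" "l \<le> f k - \<theta>" for k
  proof -
    have "(\<Sum>i=1..k. c i) = (\<Sum>i=1..k. l)"
    proof (intro sum.cong refl)
      fix i assume "i \<in> {1..k}"
      then have "f k \<le> f i" using mono that by auto
      then show "c i = l" using that unfolding c_def by auto
    qed
    then have "(\<Sum>i=1..k. c i) = real k * l" by simp
    then show ?thesis using G_eq[of k] Fb[OF that(1,2)] alg[of k] by linarith
  qed
  have FB: "(\<Sum>i=1..k. g i) \<le> l * real k * (real m - real k)" if "1 \<le> k" "k \<le> m" "k = m \<or> f (Suc k) \<le> \<theta>" for k
  proof -
    have c0: "(\<Sum>i=Suc k..m. c i) = 0"
    proof (intro sum.neutral ballI)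
      fix i assume i: "i \<in> {Suc k..m}"
      then have "k \<noteq> m" by auto
      with that have "f (Suc k) \<le> \<theta>" by auto
      moreover have "f i \<le> f (Suc k)" using mono i by auto
      ultimately show "c i = 0" unfolding c_def using l0 by auto
    qed
    have ck: "(\<Sum>i=1..k. c i) = - f (Suc m)" using split_sum[of k m c] that(2) c0 csum by simp
    have ft: "(\<Sum>i=1..k. f i) + (\<Sum>i=Suc k..m. f i) = - f (Suc m)" using split_sum[of k m f] that(2) Fm by simp
    have Gk: "(\<Sum>i=1..k. g i) = (\<Sum>i=1..k. f i) + f (Suc m)" using G_eq[of k] ck by simp
    show ?thesis
    proof (cases "f (Suc m) \<le> - (real k * l)")
      case True then show ?thesis using Gk Fb[OF that(1,2)] alg[of k] by linarith
    next
      case False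
      have "(\<Sum>i=Suc k..m. f (Suc m)) \<le> (\<Sum>i=Suc k..m. f i)"
        by (intro sum_mono) (use mono in auto)
      then have h1: "(real m - real k) * f (Suc m) \<le> (\<Sum>i=Suc k..m. f i)"
        using that(2) by (simp add: of_nat_diff)
      have h2: "(real m - real k) * (- f (Suc m)) \<le> (real m - real k) * (l * real k)"
        using False that(2) by (intro mult_left_mono) (auto simp: mult.commute)
      show ?thesis using Gk ft h1 h2 by (simp add: algebra_simps)
    qed
  qed
  have Gbound: "\<forall>k\<in>{1..m-1}. (\<Sum>j=1..k. g j) \<le> l * real k * (real m - real k)"
  proof
    fix k assume k: "k \<in> {1..m-1}"
    then have k1: "1 \<le> k" "k < m" by auto
    consider "l \<le> f k - \<theta>" | "f (Suc k) \<le> \<theta>" | "f k - \<theta> < l" "\<theta> < f (Suc k)" by linarith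
    then show "(\<Sum>j=1..k. g j) \<le> l * real k * (real m - real k)"
    proof cases
      case 1 then show ?thesis using FA k1 by auto
    next
      case 2 then show ?thesis using FB k1 by auto
    next
      case 3
      define A where "A = {j. j < k \<and> (j = 0 \<or> l \<le> f j - \<theta>)}"
      define a where "a = Max A"
      have finA: "finite A" by (rule finite_subset[of A "{..<k}"]) (auto simp: A_def)
      have "0 \<in> A" using k1 unfolding A_def by auto
      then have aA: "a \<in> A" and amax: "\<forall>j\<in>A. j \<le> a" using finA unfolding a_def by (auto intro: Max_in)
      have ak: "a < k" using aA unfolding A_def by auto
      have mida: "g i = \<theta>" if "a < i" "i \<le> k" for i
      proof -
        have "\<not> l \<le> f i - \<theta>"
        proof (cases "i = k")
          case True then show ?thesis using 3 by simp
        next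
          case False then have "i < k" using that by simp
          then show ?thesis using amax that(1) unfolding A_def by force
        qed
        moreover have "\<theta> < f i" using 3 mono[of i "Suc k"] that k1 by auto
        ultimately show ?thesis unfolding g_def c_def by auto
      qed
      define B where "B = {j. k < j \<and> j \<le> m \<and> (j = m \<or> f (Suc j) \<le> \<theta>)}"
      define b where "b = Min B"
      have finB: "finite B" by (rule finite_subset[of B "{..m}"]) (auto simp: B_def)
      have "m \<in> B" using k1 unfolding B_def by auto
      then have bB: "b \<in> B" and bmin: "\<forall>j\<in>B. b \<le> j" using finB unfolding b_def by (auto intro: Min_in)
      have kb: "k < b" "b \<le> m" using bB unfolding B_def by auto
      have midb: "g i = \<theta>" if "k < i" "i \<le> b" for i
      proof -
        have "\<theta> < f i"
        proof (cases "i = Suc k")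
          case True then show ?thesis using 3 by simp
        next
          case False
          then have j: "k < i - 1" "i - 1 < b" using that by auto
          then have "i - 1 \<notin> B" using bmin by force
          moreover have "i - 1 \<le> m" using j kb by auto
          ultimately have "\<not> f (Suc (i - 1)) \<le> \<theta>" using j unfolding B_def by auto
          moreover have "Suc (i - 1) = i" using j by auto
          ultimately show ?thesis by simp
        qed
        moreover have "f i \<le> f k" using mono[of k i] that k1 kb by auto
        ultimately show ?thesis unfolding g_def c_def using 3 by auto
      qed
      have Ga: "(\<Sum>i=1..a. g i) \<le> l * real a * (real m - real a)"
      proof (cases "a = 0")
        case True then show ?thesis by simp
      next
        case False then show ?thesis using FA[of a] aA ak k1 unfolding A_def by auto
      qed
      have Gb: "(\<Sum>i=1..b. g i) \<le> l * real b * (real m - real b)"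
        using FB[of b] bB kb k1 unfolding B_def by auto
      have e1: "(\<Sum>i=1..k. g i) = (\<Sum>i=1..a. g i) + (real k - real a) * \<theta>"
      proof -
        have "(\<Sum>i=Suc a..k. g i) = (\<Sum>i=Suc a..k. \<theta>)" using mida by (intro sum.cong) auto
        then show ?thesis using split_sum[of a k g] ak by (simp add: of_nat_diff)
      qed
      have e2: "(\<Sum>i=1..b. g i) = (\<Sum>i=1..k. g i) + (real b - real k) * \<theta>"
      proof -
        have "(\<Sum>i=Suc k..b. g i) = (\<Sum>i=Suc k..b. \<theta>)" using midb by (intro sum.cong) auto
        then show ?thesis using split_sum[of k b g] kb by (simp add: of_nat_diff)
      qed
      show ?thesis by (rule chord[OF ak kb(1) l0 e1 e2 Ga Gb])
    qed
  qed
  obtain \<tau>' where t1: "\<forall>i\<in>{1..m}. \<forall>j\<in>{1..m}. i \<noteq> j \<longrightarrow> \<bar>\<tau>' i j\<bar> \<le> l \<and> \<tau>' i j = - \<tau>' j i"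
      and t2: "\<forall>i\<in>{1..m}. g i + (\<Sum>j\<in>{1..m} - {i}. \<tau>' i j) = 0"
    using Suc.IH[OF gmono Gbound gsum] by blast
  define \<tau> where "\<tau> i j = (if j = Suc m \<and> i \<noteq> Suc m then - c i
      else if i = Suc m \<and> j \<noteq> Suc m then c j else \<tau>' i j)" for i j
  show ?case
  proof (rule exI[of _ \<tau>], rule conjI)
    show "\<forall>i\<in>{1..Suc m}. \<forall>j\<in>{1..Suc m}. i \<noteq> j \<longrightarrow> \<bar>\<tau> i j\<bar> \<le> l \<and> \<tau> i j = - \<tau> j i"
    proof (intro ballI impI)
    fix i j assume i: "i \<in> {1..Suc m}" and j: "j \<in> {1..Suc m}" and ij: "i \<noteq> j"
    have t1a: "\<bar>\<tau>' i j\<bar> \<le> l" "\<tau>' i j = - \<tau>' j i"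
      if "i \<in> {1..m}" "j \<in> {1..m}" "i \<noteq> j" for i j
      using t1 that by blast+
    consider "i = Suc m" | "j = Suc m" | "i \<in> {1..m}" "j \<in> {1..m}"
      using i j by (auto simp: le_Suc_eq)
    then show "\<bar>\<tau> i j\<bar> \<le> l \<and> \<tau> i j = - \<tau> j i"
    proof cases
      case 1
      then have "j \<noteq> Suc m" using ij by simp
      then show ?thesis using 1 c_bnd[of j] unfolding \<tau>_def by simp
    next
      case 2
      then have "i \<noteq> Suc m" using ij by simp
      then show ?thesis using 2 c_bnd[of i] unfolding \<tau>_def by simp
    next
      case 3
      then have "i \<noteq> Suc m" "j \<noteq> Suc m" by auto
      then have "\<tau> i j = \<tau>' i j" "\<tau> j i = \<tau>' j i" unfolding \<tau>_def by auto
      then show ?thesis using t1a[OF 3 ij] by simp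
    qed
    qed
  next
    show "\<forall>i\<in>{1..Suc m}. f i + (\<Sum>j\<in>{1..Suc m} - {i}. \<tau> i j) = 0"
    proof
    fix i assume i: "i \<in> {1..Suc m}"
    show "f i + (\<Sum>j\<in>{1..Suc m} - {i}. \<tau> i j) = 0"
    proof (cases "i = Suc m")
      case True
      have "{1..Suc m} - {i} = {1..m}" using True by auto
      then have "(\<Sum>j\<in>{1..Suc m} - {i}. \<tau> i j) = (\<Sum>j\<in>{1..m}. c j)"
        using True by (simp add: \<tau>_def)
      then show ?thesis using csum True by simp
    next
      case False
      then have im: "i \<in> {1..m}" using i by auto
      have "{1..Suc m} - {i} = insert (Suc m) ({1..m} - {i})" using False i by auto
      then have "(\<Sum>j\<in>{1..Suc m} - {i}. \<tau> i j) = \<tau> i (Suc m) + (\<Sum>j\<in>{1..m} - {i}. \<tau> i j)"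
        by simp
      also have "(\<Sum>j\<in>{1..m} - {i}. \<tau> i j) = (\<Sum>j\<in>{1..m} - {i}. \<tau>' i j)"
        using False by (intro sum.cong) (auto simp: \<tau>_def)
      finally have eq: "(\<Sum>j\<in>{1..Suc m} - {i}. \<tau> i j) = \<tau> i (Suc m) + (\<Sum>j\<in>{1..m} - {i}. \<tau>' i j)" .
      have "\<tau> i (Suc m) = - c i" using False unfolding \<tau>_def by simp
      moreover have "g i + (\<Sum>j\<in>{1..m} - {i}. \<tau>' i j) = 0" using t2 im by blast
      ultimately show ?thesis using eq unfolding g_def by linarith
    qed
    qed
  qed
qed


theorem corollary1:
  fixes m :: nat and lambda2 :: real and f :: "nat \<Rightarrow> real"
  assumes "m \<ge> 1"
    and "lambda2 \<ge> 0"
    and "\<And>i j. 1 \<le> i \<Longrightarrow> i \<le> j \<Longrightarrow> j \<le> m \<Longrightarrow> f i \<ge> f j"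
  shows "(\<exists>\<tau> :: nat \<Rightarrow> nat \<Rightarrow> real.
            (\<forall>i\<in>{1..m}. \<forall>j\<in>{1..m}. i \<noteq> j \<longrightarrow>
                 \<bar>\<tau> i j\<bar> \<le> lambda2 \<and> \<tau> i j = - \<tau> j i)
          \<and> (\<forall>i\<in>{1..m}. f i + (\<Sum>j\<in>{1..m} - {i}. \<tau> i j) = 0))
       \<longleftrightarrow>
         ((\<forall>k\<in>{1..m-1}. (\<Sum>j=1..k. f j) \<le> lambda2 * real k * (real m - real k))
          \<and> (\<Sum>j=1..m. f j) = 0)"
proof
  assume "\<exists>\<tau> :: nat \<Rightarrow> nat \<Rightarrow> real.
            (\<forall>i\<in>{1..m}. \<forall>j\<in>{1..m}. i \<noteq> j \<longrightarrow>
                 \<bar>\<tau> i j\<bar> \<le> lambda2 \<and> \<tau> i j = - \<tau> j i)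
          \<and> (\<forall>i\<in>{1..m}. f i + (\<Sum>j\<in>{1..m} - {i}. \<tau> i j) = 0)"
  then obtain \<tau> :: "nat \<Rightarrow> nat \<Rightarrow> real" where
    a: "\<forall>i\<in>{1..m}. \<forall>j\<in>{1..m}. i \<noteq> j \<longrightarrow> \<bar>\<tau> i j\<bar> \<le> lambda2 \<and> \<tau> i j = - \<tau> j i"
    and r: "\<forall>i\<in>{1..m}. f i + (\<Sum>j\<in>{1..m} - {i}. \<tau> i j) = 0" by blast
  show "(\<forall>k\<in>{1..m-1}. (\<Sum>j=1..k. f j) \<le> lambda2 * real k * (real m - real k))
          \<and> (\<Sum>j=1..m. f j) = 0"
  proof
    show "\<forall>k\<in>{1..m-1}. (\<Sum>j=1..k. f j) \<le> lambda2 * real k * (real m - real k)"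
    proof
      fix k assume "k \<in> {1..m-1}"
      then have "k \<le> m" by auto
      then show "(\<Sum>j=1..k. f j) \<le> lambda2 * real k * (real m - real k)"
        by (rule nec(1)[OF a r])
    qed
    show "(\<Sum>j=1..m. f j) = 0" by (rule nec(2)[OF a r order_refl])
  qed
next
  assume h: "(\<forall>k\<in>{1..m-1}. (\<Sum>j=1..k. f j) \<le> lambda2 * real k * (real m - real k))
          \<and> (\<Sum>j=1..m. f j) = 0"
  have mono: "\<forall>i j. 1 \<le> i \<longrightarrow> i \<le> j \<longrightarrow> j \<le> m \<longrightarrow> f j \<le> f i"
    using assms(3) by blast
  show "\<exists>\<tau> :: nat \<Rightarrow> nat \<Rightarrow> real.
            (\<forall>i\<in>{1..m}. \<forall>j\<in>{1..m}. i \<noteq> j \<longrightarrow>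
                 \<bar>\<tau> i j\<bar> \<le> lambda2 \<and> \<tau> i j = - \<tau> j i)
          \<and> (\<forall>i\<in>{1..m}. f i + (\<Sum>j\<in>{1..m} - {i}. \<tau> i j) = 0)"
    by (rule suff[OF assms(1,2) mono conjunct1[OF h] conjunct2[OF h]])
qed

end
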